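(* Let $a\in\mathbb{R}$ and let the polynomials $H_m(z)$ be defined by the generating function \[ \sum_{m=0}^{\infty}H_m(z)t^m=\frac{1}{1+t+at^2+zt^3}. \] If $-1\le a\le 1/3$, then for every $m$ the zeros of $H_m(z)$ lie in the real interval \[ I_a=\left(-\infty,\ \frac{-2+9a-2\sqrt{(1-3a)^3}}{27}\right], \] and $\bigcup_{m=0}^{\infty}\mathcal{Z}(H_m)$ is dense in $I_a$.
   Context: $\mathcal{Z}(H_m)$ denotes the set of zeros of $H_m(z)$. Convention: the zeros of the constant zero polynomial are considered real (and the statement about their location is vacuous). *)

theory Defs
  imports "HOL-Analysis.Analysis" "HOL-Computational_Algebra.Polynomial"
begin

text \<open>H a m is the coefficient of t^m in 1/(1 + t + a t^2 + z t^3), as a real polynomial in z.\<close>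
fun H :: "real \<Rightarrow> nat \<Rightarrow> real poly" where
  "H a 0 = 1"
| "H a (Suc 0) = -1"
| "H a (Suc (Suc 0)) = [:1 - a:]"
| "H a (Suc (Suc (Suc n))) =
     - H a (Suc (Suc n)) - smult a (H a (Suc n)) - [:0, 1:] * H a n"

definition Hzeros :: "real \<Rightarrow> nat \<Rightarrow> complex set" where
  "Hzeros a m = {z. poly (map_poly complex_of_real (H a m)) z = 0}"

definition Ia :: "real \<Rightarrow> real set" where
  "Ia a = {.. (-2 + 9 * a - 2 * sqrt ((1 - 3 * a) ^ 3)) / 27}"

end

theory Submission
  imports Defs "HOL-Real_Asymp.Real_Asymp"
begin


lemma H_degree: "degree (H a m) \<le> m div 3"
proof (induction a m rule: H.induct)
  case (4 a n)
  have d1: "degree (- H a (Suc (Suc n)) - smult a (H a (Suc n))) \<le> n div 3 + 1"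
  proof -
    have "degree (- H a (Suc (Suc n)) - smult a (H a (Suc n)))
        \<le> max (degree (H a (Suc (Suc n)))) (degree (smult a (H a (Suc n))))"
      by (metis degree_diff_le_max degree_minus)
    also have "\<dots> \<le> n div 3 + 1" using 4 by (auto simp: degree_smult_le intro: order.trans[OF degree_smult_le])
    finally show ?thesis .
  qed
  have d2: "degree ([:0, 1:] * H a n) \<le> n div 3 + 1"
    using degree_mult_le[of "[:0,1:]" "H a n"] 4(3) by simp
  have "degree (- H a (Suc (Suc n)) - smult a (H a (Suc n)) - [:0, 1:] * H a n)
     \<le> max (degree (- H a (Suc (Suc n)) - smult a (H a (Suc n)))) (degree ([:0, 1:] * H a n))"
    by (rule degree_diff_le_max)
  also have "\<dots> \<le> Suc (Suc (Suc n)) div 3" using d1 d2 by auto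
  finally show ?case by simp
qed auto

lemma H_coeff3: "coeff (H a (3*k)) k = (-1)^k"
proof (induction k)
  case 0 then show ?case by simp
next
  case (Suc k)
  have e: "3 * Suc k = Suc (Suc (Suc (3*k)))" by simp
  have "coeff (H a (Suc (Suc (3*k)))) (Suc k) = 0"
    using H_degree[of a "Suc (Suc (3*k))"] by (intro coeff_eq_0) auto
  moreover have "coeff (H a (Suc (3*k))) (Suc k) = 0"
    using H_degree[of a "Suc (3*k)"] by (intro coeff_eq_0) auto
  ultimately show ?case using Suc by (simp only: e H.simps) (simp add: coeff_pCons)
qed

lemma S_rec:
  fixes r th ph :: real
  shows "r^(n+2) * sin ((real n+2)*th - ph) = 2*(r*cos th)*(r^(n+1) * sin ((real n+1)*th - ph)) - r^2*(r^n * sin (real n*th - ph))"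
proof -
  define x where "x = (real n+1)*th - ph"
  have 1: "(real n+2)*th - ph = x + th" "real n*th - ph = x - th" unfolding x_def by (simp_all add: algebra_simps)
  have e: "sin (x+th) = 2 * sin x * cos th - sin (x - th)" by (simp add: sin_add sin_diff)
  have 2: "r^(n+2) = r * r * r^n" "r^(n+1) = r * r^n" by (simp_all add: power_add)
  show ?thesis unfolding 1 x_def[symmetric] e 2 power2_eq_square by (simp add: algebra_simps)
qed

lemma H_formula:
  fixes a l r rho eta th ph :: real
  assumes hq: "r^2 = l^2+l+a" and hc: "r * cos th = -(1+l)/2"
    and hR: "rho^2 = 3*l^2+2*l+a" and rho: "rho > 0" and eta: "eta > 0"
    and hsp: "rho * sin ph = eta" and hcp: "rho * cos ph = -(1+3*l)/2" and hst: "r * sin th = eta"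
  shows "poly (H a m) (-l*(l^2+l+a)) = l^(m+2)/rho^2 + r^(m+2) * sin ((real m+2)*th - ph)/(rho*eta)"
proof -
  define S where "S n = r^n * sin (real n * th - ph)" for n
  define K where "K n = l^n/rho^2 + S n/(rho*eta)" for n
  define z where "z = -l*(l^2+l+a)"
  have Srec: "S (n+2) = 2*(-(1+l)/2) * S (n+1) - (l^2+l+a) * S n" for n
    using S_rec[of r n th ph] unfolding S_def hc hq by (simp add: add.commute)
  have S0: "S 0 = -eta/rho" using hsp rho unfolding S_def by (simp add: field_simps)
  have S1: "S 1 = -l*eta/rho"
  proof -
    have "rho * S 1 = rho * (r * sin th * cos ph - r * cos th * sin ph)"
      unfolding S_def by (simp add: sin_diff algebra_simps)
    also have "\<dots> = eta * (rho * cos ph) - r * cos th * (rho * sin ph)"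
      using hst by (simp add: algebra_simps)
    also have "\<dots> = -l*eta" unfolding hcp hc hsp by (simp add: field_simps)
    finally show ?thesis using rho by (simp add: field_simps)
  qed
  have S2: "S 2 = eta/rho * (2*l^2+2*l+a)"
  proof -
    have "S 2 = -(1+l) * S 1 - (l^2+l+a) * S 0" using Srec[of 0] by (simp add: numeral_2_eq_2)
    then have "rho * S 2 = rho * (-(1+l) * S 1 - (l^2+l+a) * S 0)" by simp
    also have "\<dots> = -(1+l) * (rho * S 1) - (l^2+l+a) * (rho * S 0)" by (simp add: algebra_simps)
    also have "\<dots> = eta * (2*l^2+2*l+a)" unfolding S0 S1 using rho by (simp add: algebra_simps power2_eq_square)
    finally show ?thesis using rho by (simp add: field_simps)
  qed
  have K0: "K 0 = 0" unfolding K_def S0 using rho eta by (simp add: field_simps power2_eq_square)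
  have K1: "K 1 = 0" unfolding K_def S1 using rho eta by (simp add: field_simps power2_eq_square)
  have K2: "K 2 = 1"
  proof -
    have "S 2/(rho*eta) = (2*l^2+2*l+a)/rho^2" using rho eta by (simp add: S2 field_simps power2_eq_square)
    then have "K 2 = (l^2 + (2*l^2+2*l+a))/rho^2" unfolding K_def by (simp add: add_divide_distrib)
    also have "\<dots> = rho^2/rho^2" using hR by (simp add: algebra_simps)
    finally show ?thesis using rho by simp
  qed
  have Srec': "S (Suc (Suc n)) = 2*(-(1+l)/2) * S (Suc n) - (l^2+l+a) * S n" for n
    using Srec[of n] by (simp add: numeral_2_eq_2)
  have Krec: "K (Suc (Suc (Suc n))) = - K (Suc (Suc n)) - a * K (Suc n) - z * K n" for n
  proof -
    have l3: "l^(Suc (Suc (Suc n))) = - (l^(Suc (Suc n))) - a * (l^(Suc n)) - z * (l^n)" unfolding z_def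
      by (simp add: power2_eq_square algebra_simps)
    have s3': "S (Suc (Suc (Suc n))) = - S (Suc (Suc n)) - a * S (Suc n) - z * S n"
      unfolding Srec'[of "Suc n"] Srec'[of n] z_def by (simp add: power2_eq_square field_simps)
    show ?thesis unfolding K_def l3 s3' using rho eta by (simp add: field_simps)
  qed
  have main: "poly (H a m) z = K (m+2)" for m
  proof (induction m rule: less_induct)
    case (less m)
    consider "m = 0" | "m = 1" | "m = 2" | n where "m = Suc (Suc (Suc n))"
      by (metis One_nat_def Suc_1 not0_implies_Suc)
    then show ?case
    proof cases
      case 1 then show ?thesis using K2 by (simp add: numeral_2_eq_2)
    next
      case 2 then show ?thesis using Krec[of 0] K0 K1 K2 by (simp add: numeral_eq_Suc)
    next
      case 3 then show ?thesis using Krec[of 1] Krec[of 0] K0 K1 K2 by (simp add: numeral_eq_Suc)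
    next
      case (4 n)
      have "poly (H a (Suc (Suc n))) z = K (Suc (Suc (Suc (Suc n))))" "poly (H a (Suc n)) z = K (Suc (Suc (Suc n)))" "poly (H a n) z = K (Suc (Suc n))"
        using less 4 by (simp_all add: numeral_eq_Suc)
      then show ?thesis using Krec[of "Suc (Suc n)"] 4 by (simp add: numeral_eq_Suc algebra_simps z_def)
    qed
  qed
  show ?thesis using main[of m] unfolding K_def S_def z_def by (simp add: add.commute)
qed



lemma frac_aux:
  fixes X Y p e :: real
  assumes "X*e < Y*p" "p > 0" "e > 0"
  shows "X/(p*p) < Y/(p*e)"
proof -
  have "p*(X*e) < p*(Y*p)" using mult_strict_left_mono[OF assms(1) assms(2)] .
  then show ?thesis using assms(2,3) by (simp add: divide_simps algebra_simps)
qed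

lemma sin_helper:
  fixes Q D X :: real
  assumes "Q > 0" "4*Q = D + X^2" "D \<ge> 0"
  shows "sqrt Q * sqrt (1 - (-X/(2 * sqrt Q))^2) = sqrt D / 2"
proof -
  have sq: "(sqrt Q)^2 = Q" using assms(1) by simp
  have "1 - (-X/(2 * sqrt Q))^2 = D/(4*Q)"
    using assms(1,2) sq by (simp add: field_simps power_divide power_mult_distrib)
  then have "sqrt Q * sqrt (1 - (-X/(2 * sqrt Q))^2) = sqrt (Q * (D/(4*Q)))"
    by (metis real_sqrt_mult)
  also have "Q * (D/(4*Q)) = D/4" using assms(1) by simp
  also have "sqrt (D/4) = sqrt D / 2" by (simp add: real_sqrt_divide)
  finally show ?thesis .
qed

locale setting = fixes a :: real assumes a1: "-1 \<le> a" and a2: "a \<le> 1/3"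
begin

definition "s = sqrt (1-3*a)"
definition "lb = (2* s-1)/3"
definition "bb = (-2+9*a-2* sqrt((1-3*a)^3))/27"
definition "zf l = -l*(l^2+l+a)"
definition "qf l = l^2+l+a"
definition "Rf l = 3*l^2+2*l+a"
definition "Df l = 3*l^2+2*l+4*a-1"
definition "cth l = -(1+l)/(2* sqrt(qf l))"
definition "cph l = -(1+3*l)/(2* sqrt(Rf l))"
definition "th l = arccos (cth l)"
definition "ph l = arccos (cph l)"
definition "psi m l = (real m + 2) * th l - ph l"
definition "g m l = poly (H a m) (zf l)"

lemma s_nonneg: "0 \<le> s" and s_le2: "s \<le> 2" and s2: "s^2 = 1-3*a"
proof -
  have "3*a \<le> 1" using a2 by linarith
  then show "0 \<le> s" unfolding s_def by simp
  then show "s^2 = 1-3*a" unfolding s_def by simp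
  have "s^2 \<le> 2^2" unfolding \<open>s^2 = 1-3*a\<close> using a1 by simp
  then show "s \<le> 2" using \<open>0 \<le> s\<close> by (meson power2_le_imp_le zero_le_numeral)
qed

lemma lb_ge: "lb \<ge> -1/3" unfolding lb_def using s_nonneg by simp

lemma Df_factor: "Df l = (3*l+1-2* s)*(3*l+1+2* s)/3"
proof -
  have "(3*l+1-2* s)*(3*l+1+2* s) = (3*l+1)^2 - 4* s^2" by (simp add: algebra_simps power2_eq_square)
  then show ?thesis unfolding Df_def s2 by (simp add: algebra_simps power2_eq_square)
qed

lemma Df_pos: "l > lb \<Longrightarrow> Df l > 0"
  unfolding Df_factor using s_nonneg by (intro divide_pos_pos mult_pos_pos) (auto simp: lb_def)

lemma Df_nonneg: "l \<ge> lb \<Longrightarrow> Df l \<ge> 0"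
  unfolding Df_factor using s_nonneg by (intro divide_nonneg_pos mult_nonneg_nonneg) (auto simp: lb_def)

lemma qf_eq: "4 * qf l = Df l + (1+l)^2" unfolding qf_def Df_def by (simp add: algebra_simps power2_eq_square)
lemma Rf_eq: "4 * Rf l = Df l + (1+3*l)^2" unfolding Rf_def Df_def by (simp add: algebra_simps power2_eq_square)

lemma qf_pos: "l \<ge> lb \<Longrightarrow> qf l > 0"
proof -
  assume l: "l \<ge> lb"
  have "(1+l)^2 > 0" using lb_ge l by simp
  then show ?thesis using qf_eq[of l] Df_nonneg[OF l] by linarith
qed

lemma Rf_pos: "l > lb \<Longrightarrow> Rf l > 0"
  using Rf_eq[of l] Df_pos[of l] by (smt (verit) zero_le_power2)

lemma la_pos: "l > lb \<Longrightarrow> l + a > 0"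
proof -
  assume "l > lb"
  have "lb + a = s*(2-s)/3" unfolding lb_def
  proof -
    have "a = (1 - s^2)/3" using s2 by simp
    then show "(2 * s - 1) / 3 + a = s * (2 - s) / 3" by (simp add: field_simps power2_eq_square)
  qed
  moreover have "s*(2-s)/3 \<ge> 0" using s_nonneg s_le2 by simp
  ultimately show ?thesis using \<open>l > lb\<close> by linarith
qed

lemma cth_bounds: "l \<ge> lb \<Longrightarrow> -1 \<le> cth l \<and> cth l \<le> 0"
proof -
  assume l: "l \<ge> lb"
  have q: "sqrt (qf l) > 0" using qf_pos[OF l] by simp
  have l1: "1 + l > 0" using lb_ge l by simp
  have "(1+l)^2 \<le> (2 * sqrt (qf l))^2" using qf_eq[of l] Df_nonneg[OF l] qf_pos[OF l]
    by (simp add: power_mult_distrib)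
  then have "1+l \<le> 2 * sqrt (qf l)" using q l1 by (meson power2_le_imp_le less_le zero_le_mult_iff zero_le_numeral)
  then show ?thesis unfolding cth_def using q l1 by (simp add: field_simps)
qed

lemma cph_bounds: "l > lb \<Longrightarrow> -1 < cph l \<and> cph l \<le> 0"
proof -
  assume l: "l > lb"
  have q: "sqrt (Rf l) > 0" using Rf_pos[OF l] by simp
  have l1: "1 + 3*l \<ge> 0" using lb_ge l by simp
  have "(1+3*l)^2 < (2 * sqrt (Rf l))^2" using Rf_eq[of l] Df_pos[OF l] Rf_pos[OF l]
    by (simp add: power_mult_distrib)
  then have "1+3*l < 2 * sqrt (Rf l)" using q l1 by (smt (verit) power_mono)
  then show ?thesis unfolding cph_def using q l1 by (simp add: field_simps)
qed

lemma g_formula: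
  assumes l: "l > lb"
  shows "g m l = l^(m+2)/Rf l + sqrt (qf l)^(m+2) * sin (psi m l)/(sqrt (Rf l) * (sqrt (Df l)/2))"
proof -
  have l': "l \<ge> lb" using l by simp
  have q: "qf l > 0" using qf_pos[OF l'] .
  have R: "Rf l > 0" using Rf_pos[OF l] .
  have D: "Df l > 0" using Df_pos[OF l] .
  note cb = cth_bounds[OF l'] and pb = cph_bounds[OF l]
  have "cos (th l) = cth l" unfolding th_def using cb by simp
  then have hc: "sqrt (qf l) * cos (th l) = -(1+l)/2"
    using q by (simp add: cth_def)
  have "cos (ph l) = cph l" unfolding ph_def using pb by simp
  then have hcp: "sqrt (Rf l) * cos (ph l) = -(1+3*l)/2"
    using R by (simp add: cph_def)
  have hst: "sqrt (qf l) * sin (th l) = sqrt (Df l)/2"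
    unfolding th_def using cb sin_helper[OF q qf_eq[of l] less_imp_le[OF D]]
    by (simp add: sin_arccos cth_def)
  have hsp: "sqrt (Rf l) * sin (ph l) = sqrt (Df l)/2"
    unfolding ph_def using pb sin_helper[OF R Rf_eq[of l] less_imp_le[OF D]]
    by (simp add: sin_arccos cph_def)
  have "poly (H a m) (-l*(l^2+l+a)) = l^(m+2)/(sqrt (Rf l))^2 + sqrt (qf l)^(m+2) * sin ((real m+2)*th l - ph l)/(sqrt (Rf l)*(sqrt (Df l)/2))"
    by (rule H_formula) (use q R D hc hcp hst hsp in \<open>auto simp: qf_def Rf_def\<close>)
  then show ?thesis unfolding g_def zf_def psi_def using R by simp
qed

lemma dominance:
  assumes l: "l > lb"
  shows "\<bar>l^(m+2)/Rf l\<bar> < sqrt (qf l)^(m+2)/(sqrt (Rf l) * (sqrt (Df l)/2))"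
proof -
  have l': "l \<ge> lb" using l by simp
  have q: "qf l > 0" using qf_pos[OF l'] .
  have R: "Rf l > 0" using Rf_pos[OF l] .
  have D: "Df l > 0" using Df_pos[OF l] .
  have "\<bar>l\<bar> < sqrt (qf l)"
  proof -
    have "\<bar>l\<bar>^2 < (sqrt (qf l))^2" using la_pos[OF l] q unfolding qf_def by (simp add: power2_eq_square)
    then show ?thesis using q by (smt (verit) power_mono real_sqrt_gt_zero)
  qed
  then have lt: "\<bar>l\<bar>^(m+2) < sqrt (qf l)^(m+2)" by (intro power_strict_mono) auto
  have eta_le: "sqrt (Df l)/2 \<le> sqrt (Rf l)"
  proof -
    have "Df l/4 \<le> Rf l" using Rf_eq[of l] zero_le_power2[of "1+3*l"] by linarith
    then have "sqrt (Df l/4) \<le> sqrt (Rf l)" by simp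
    then show ?thesis by (simp add: real_sqrt_divide)
  qed
  have eta: "sqrt (Df l)/2 > 0" using D by simp
  have sR: "sqrt (Rf l) > 0" using R by simp
  have "\<bar>l\<bar>^(m+2) * (sqrt (Df l)/2) < sqrt (qf l)^(m+2) * sqrt (Rf l)"
    using lt eta_le eta sR by (smt (verit) mult_mono mult_strict_right_mono zero_le_power abs_ge_zero)
  then have key: "\<bar>l\<bar>^(m+2) / (sqrt (Rf l) * sqrt (Rf l)) < sqrt (qf l)^(m+2)/(sqrt (Rf l) * (sqrt (Df l)/2))"
    using sR eta by (rule frac_aux)
  have RR: "sqrt (Rf l) * sqrt (Rf l) = Rf l" using R by simp
  have "\<bar>l^(m+2)/Rf l\<bar> = \<bar>l\<bar>^(m+2) / (sqrt (Rf l) * sqrt (Rf l))" using R RR by (simp add: abs_divide abs_mult flip: power_abs)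
  then show ?thesis using key by linarith
qed

lemma g_sign:
  assumes l: "l > lb" and sn: "sin (psi m l) = (-1)^j"
  shows "g m l * (-1)^j > 0"
proof -
  define A where "A = sqrt (qf l)^(m+2)/(sqrt (Rf l) * (sqrt (Df l)/2))"
  define B where "B = l^(m+2)/Rf l"
  have gf: "g m l = B + A * (-1)^j" unfolding g_formula[OF l] A_def B_def sn by simp
  have d: "\<bar>B\<bar> < A" unfolding A_def B_def using dominance[OF l] .
  have "g m l * (-1)^j = B * (-1)^j + A" unfolding gf by (simp add: algebra_simps flip: power_add mult_2)
  moreover have "\<bar>B * (-1)^j\<bar> = \<bar>B\<bar>" by (simp add: abs_mult)
  ultimately show ?thesis using d by linarith
qed

end


context setting begin

lemma zf_strict:
  assumes "lb \<le> u" "u < v" shows "zf v < zf u"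
proof -
  have a: "a = (1 - s^2)/3" using s2 by simp
  have "u + v + 2/3 \<ge> 4* s/3" using assms unfolding lb_def by simp
  then have h1: "(u + v + 2/3)^2 \<ge> (4* s/3)^2" using s_nonneg by (intro power_mono) auto
  have h2: "(u - v)^2 > 0" using assms by simp
  have Q: "u^2+u* v+v^2+u+v+a > 0"
  proof -
    have "u^2+u* v+v^2+u+v+a = 3/4*(u+v+2/3)^2 - (1-3*a)/3 + (u-v)^2/4"
      by (simp add: power2_eq_square field_simps)
    then have "u^2+u* v+v^2+u+v+a = 3/4*(u+v+2/3)^2 - s^2/3 + (u-v)^2/4"
      using s2 by simp
    moreover have "3/4*(4* s/3)^2 - s^2/3 \<ge> 0" by (simp add: power2_eq_square)
    ultimately show ?thesis using h1 h2 by linarith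
  qed
  have "zf u - zf v = (v - u) * (u^2+u* v+v^2+u+v+a)"
    unfolding zf_def by (simp add: power2_eq_square algebra_simps)
  moreover have "(v - u) * (u^2+u* v+v^2+u+v+a) > 0" using Q assms by simp
  ultimately show ?thesis by linarith
qed

lemma zf_lb: "zf lb = bb"
proof -
  have sq3: "sqrt ((1-3*a)^3) = s^3" unfolding s_def by (simp add: real_sqrt_power)
  have b: "bb = (-2+9*a-2 * s^3)/27" unfolding bb_def sq3 by simp
  show ?thesis using s2 unfolding b zf_def lb_def by algebra
qed

lemma cont_zf [continuous_intros]: "continuous_on A zf"
  unfolding zf_def by (intro continuous_intros)

lemma cont_g: "continuous_on A (g m)"
  unfolding g_def by (intro continuous_intros cont_zf)

lemma cont_cth: "continuous_on {lb..} cth"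
  unfolding cth_def qf_def
proof (intro continuous_intros ballI)
  fix x assume "x \<in> {lb..}"
  then show "2 * sqrt (x^2+x+a) \<noteq> 0" using qf_pos[of x] unfolding qf_def by auto
qed

lemma cont_cph: "continuous_on {lb<..} cph"
  unfolding cph_def Rf_def
proof (intro continuous_intros ballI)
  fix x assume "x \<in> {lb<..}"
  then show "2 * sqrt (3*x^2+2*x+a) \<noteq> 0" using Rf_pos[of x] unfolding Rf_def by auto
qed

lemma cont_th: "continuous_on {lb..} th"
proof -
  have "\<forall>x\<in>{lb..}. -1 \<le> cth x \<and> cth x \<le> 1" using cth_bounds by fastforce
  then show ?thesis unfolding th_def by (intro continuous_on_arccos cont_cth)
qed

lemma cont_ph: "continuous_on {lb<..} ph"
proof -
  have "\<forall>x\<in>{lb<..}. -1 \<le> cph x \<and> cph x \<le> 1" using cph_bounds by fastforce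
  then show ?thesis unfolding ph_def by (intro continuous_on_arccos cont_cph)
qed

lemma cont_psi: "continuous_on {lb<..} (psi m)"
proof -
  have "continuous_on {lb<..} th" by (rule continuous_on_subset[OF cont_th]) auto
  then show ?thesis unfolding psi_def using cont_ph by (intro continuous_intros)
qed

lemma th_lb: "th lb = pi"
proof -
  have "3*lb+1-2 * s = 0" unfolding lb_def by (simp add: field_simps)
  then have D0: "Df lb = 0" unfolding Df_factor by simp
  have "4 * qf lb = (1+lb)^2" using qf_eq[of lb] D0 by simp
  then have "qf lb = ((1+lb)/2)^2" by (simp add: power_divide)
  moreover have "(1+lb)/2 > 0" using lb_ge by simp
  ultimately have "sqrt (qf lb) = (1+lb)/2" by simp
  then have "2 * sqrt (qf lb) = 1+lb" by simp
  then have "cth lb = -(1+lb)/(1+lb)" unfolding cth_def by simp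
  moreover have "-(1+lb)/(1+lb) = -1"
  proof -
    have "1+lb \<noteq> 0" using lb_ge by simp
    then show ?thesis by (metis divide_self minus_divide_left)
  qed
  ultimately have "cth lb = -1" by (rule trans)
  then show ?thesis unfolding th_def by simp
qed

lemma th_range: "l \<ge> lb \<Longrightarrow> pi/2 \<le> th l \<and> th l \<le> pi"
proof -
  assume l: "l \<ge> lb"
  note cb = cth_bounds[OF l]
  have "th l = pi - arccos (- cth l)" unfolding th_def using arccos_minus[of "- cth l"] cb by simp
  moreover have "arccos (- cth l) \<le> pi/2" using cb by (intro arccos_le_pi2) auto
  moreover have "th l \<le> pi" unfolding th_def using cb arccos_bounded by auto
  ultimately show ?thesis by simp
qed

lemma ph_range: "l > lb \<Longrightarrow> 0 \<le> ph l \<and> ph l \<le> pi"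
  unfolding ph_def using cph_bounds[of l] arccos_bounded by auto

lemma zf_at_bot: "filterlim zf at_bot at_top"
  unfolding zf_def by real_asymp

lemma lim_cth: "(cth \<longlongrightarrow> -(1/2)) at_top"
  unfolding cth_def qf_def by real_asymp

lemma lim_cph: "(cph \<longlongrightarrow> -(sqrt 3/2)) at_top"
proof -
  have "(cph \<longlongrightarrow> -(3 * inverse (3 powr (1/2)) / 2)) at_top"
    unfolding cph_def Rf_def by real_asymp
  moreover have "3 * inverse (3 powr (1/2)) / 2 = sqrt 3/(2::real)"
  proof -
    have "3 = sqrt 3 * sqrt (3::real)" by simp
    then show ?thesis by (simp add: powr_half_sqrt field_simps)
  qed
  ultimately show ?thesis by simp
qed

end


lemma ivt_points:
  fixes f :: "real \<Rightarrow> real" and T :: "nat \<Rightarrow> real"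
  assumes cont: "continuous_on {x0..x1} f" and x01: "x0 \<le> x1"
    and dec: "\<And>i. Suc i < n \<Longrightarrow> T (Suc i) < T i"
    and top: "0 < n \<Longrightarrow> T 0 < f x0" and bot: "\<And>i. i < n \<Longrightarrow> f x1 < T i"
  shows "\<exists>P. (\<forall>i<n. x0 \<le> P i \<and> P i \<le> x1 \<and> f (P i) = T i) \<and> (\<forall>i. Suc i < n \<longrightarrow> P i < P (Suc i))"
proof -
  have "k \<le> n \<Longrightarrow> \<exists>P. (\<forall>i<k. x0 \<le> P i \<and> P i \<le> x1 \<and> f (P i) = T i) \<and> (\<forall>i. Suc i < k \<longrightarrow> P i < P (Suc i))" for k
  proof (induction k)
    case 0 then show ?case by auto
  next
    case (Suc k)
    then obtain P where P: "\<forall>i<k. x0 \<le> P i \<and> P i \<le> x1 \<and> f (P i) = T i" "\<forall>i. Suc i < k \<longrightarrow> P i < P (Suc i)"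
      by auto
    define st where "st = (if k = 0 then x0 else P (k - 1))"
    have st1: "x0 \<le> st" "st \<le> x1" unfolding st_def using P x01 by auto
    have st2: "T k < f st"
    proof (cases "k = 0")
      case True then show ?thesis using top Suc.prems unfolding st_def by auto
    next
      case False
      then have "f st = T (k - 1)" unfolding st_def using P by auto
      moreover have "T k < T (k - 1)" using dec[of "k - 1"] False Suc.prems by auto
      ultimately show ?thesis by simp
    qed
    have "f x1 \<le> T k" using bot[of k] Suc.prems by simp
    moreover have "continuous_on {st..x1} f" by (rule continuous_on_subset[OF cont]) (use st1 in auto)
    ultimately obtain x where x: "st \<le> x" "x \<le> x1" "f x = T k"
      using IVT2'[of f x1 "T k" st] st1 st2 by auto
    have "st < x" using x st2 by (cases "st = x") auto
    define P' where "P' = P(k := x)"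
    have "\<forall>i<Suc k. x0 \<le> P' i \<and> P' i \<le> x1 \<and> f (P' i) = T i"
      unfolding P'_def using P x st1 by auto
    moreover have "\<forall>i. Suc i < Suc k \<longrightarrow> P' i < P' (Suc i)"
    proof (intro allI impI)
      fix i assume i: "Suc i < Suc k"
      show "P' i < P' (Suc i)"
      proof (cases "Suc i = k")
        case True
        then have "P' (Suc i) = x" "P' i = st" unfolding P'_def st_def by auto
        then show ?thesis using \<open>st < x\<close> by simp
      next
        case False then show ?thesis unfolding P'_def using P i by auto
      qed
    qed
    ultimately show ?case by blast
  qed
  then show ?thesis by blast
qed

lemma mono_points:
  fixes P :: "nat \<Rightarrow> real"
  assumes "\<And>i. i < K \<Longrightarrow> P i < P (Suc i)"
  shows "i \<le> j \<Longrightarrow> j \<le> K \<Longrightarrow> P i \<le> P j"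
proof (induction j)
  case 0 then show ?case by simp
next
  case (Suc j)
  show ?case
  proof (cases "i = Suc j")
    case True then show ?thesis by simp
  next
    case False
    then have "P i \<le> P j" using Suc by simp
    also have "P j < P (Suc j)" using assms Suc.prems by simp
    finally show ?thesis by simp
  qed
qed

lemma roots_between:
  fixes g :: "real \<Rightarrow> real" and P :: "nat \<Rightarrow> real"
  assumes cont: "\<And>A. continuous_on A g" and mono: "\<And>i. i < K \<Longrightarrow> P i < P (Suc i)"
    and alt: "\<And>i. i < K \<Longrightarrow> g (P i) * g (P (Suc i)) < 0"
  shows "\<exists>Q. (\<forall>i<K. P i < Q i \<and> Q i < P (Suc i) \<and> g (Q i) = 0)"
proof -
  have "\<forall>i. \<exists>q. i < K \<longrightarrow> P i < q \<and> q < P (Suc i) \<and> g q = 0"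
  proof (intro allI)
    fix i show "\<exists>q. i < K \<longrightarrow> P i < q \<and> q < P (Suc i) \<and> g q = 0"
    proof (cases "i < K")
      case True
      note m = mono[OF True] and al = alt[OF True]
      have ne: "g (P i) \<noteq> 0" "g (P (Suc i)) \<noteq> 0" using al by auto
      have "\<exists>x. P i \<le> x \<and> x \<le> P (Suc i) \<and> g x = 0"
      proof (cases "g (P i) < 0")
        case True
        then have "g (P (Suc i)) > 0" using al by (simp add: mult_less_0_iff)
        then show ?thesis using IVT'[of g "P i" 0 "P (Suc i)"] True m cont by auto
      next
        case False
        then have "g (P (Suc i)) < 0" "g (P i) > 0" using al ne by (auto simp add: mult_less_0_iff)
        then show ?thesis using IVT2'[of g "P (Suc i)" 0 "P i"] m cont by auto
      qed
      then obtain x where "P i \<le> x" "x \<le> P (Suc i)" "g x = 0" by auto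
      moreover have "x \<noteq> P i" "x \<noteq> P (Suc i)" using ne \<open>g x = 0\<close> by auto
      ultimately show ?thesis by (intro exI[of _ x]) auto
    qed auto
  qed
  then show ?thesis by metis
qed

lemma poly_of_real_map: "poly (map_poly complex_of_real p) (complex_of_real x) = complex_of_real (poly p x)"
  by (induction p) (auto simp: map_poly_pCons)

lemma all_roots_real:
  fixes p :: "real poly" and S :: "real set"
  assumes p: "p \<noteq> 0" and deg: "degree p \<le> card S" and fin: "finite S" and rt: "\<forall>x\<in>S. poly p x = 0"
  shows "{z. poly (map_poly complex_of_real p) z = 0} = complex_of_real ` S"
proof -
  define A where "A = {z. poly (map_poly complex_of_real p) z = 0}"
  have mp: "map_poly complex_of_real p \<noteq> 0"
  proof
    assume "map_poly complex_of_real p = 0"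
    then have "coeff (map_poly complex_of_real p) n = 0" for n by simp
    then have "coeff p n = 0" for n by (simp add: coeff_map_poly)
    then show False using p by (simp add: poly_eq_iff)
  qed
  have finA: "finite A" unfolding A_def using poly_roots_finite[OF mp] .
  have "card A \<le> degree (map_poly complex_of_real p)" unfolding A_def by (rule card_poly_roots_bound[OF mp])
  also have "\<dots> = degree p" by (rule degree_map_poly) simp
  finally have c1: "card A \<le> card S" using deg by simp
  have sub: "complex_of_real ` S \<subseteq> A" unfolding A_def using rt by (auto simp: poly_of_real_map)
  have c2: "card (complex_of_real ` S) = card S" by (rule card_image) (simp add: inj_on_def)
  have "card (complex_of_real ` S) = card A" using card_mono[OF finA sub] c1 c2 by simp
  then have "complex_of_real ` S = A" using card_subset_eq[OF finA sub] by simp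
  then show ?thesis unfolding A_def by simp
qed

context setting begin

lemma lim_th: "(th \<longlongrightarrow> 2*pi/3) at_top"
proof -
  have "((\<lambda>l. arccos (cth l)) \<longlongrightarrow> arccos (-(1/2))) at_top"
    by (rule isCont_tendsto_compose[OF isCont_arccos lim_cth]) auto
  then show ?thesis unfolding th_def by simp
qed

lemma lim_ph: "(ph \<longlongrightarrow> 5*pi/6) at_top"
proof -
  have s3: "sqrt 3 / 2 < (1::real)"
  proof -
    have "sqrt 3 < (2::real)" by (rule real_less_lsqrt) auto
    moreover have "sqrt 3 \<ge> (0::real)" by simp
    ultimately show ?thesis by linarith
  qed
  have s0: "sqrt 3 \<ge> (0::real)" by simp
  have "((\<lambda>l. arccos (cph l)) \<longlongrightarrow> arccos (-(sqrt 3/2))) at_top"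
    by (rule isCont_tendsto_compose[OF isCont_arccos lim_cph]) (use s3 s0 in linarith)+
  moreover have "arccos (-(sqrt 3/2)) = 5*pi/6"
  proof -
    have "arccos (sqrt 3/2) = pi/6" using arccos_cos[of "pi/6"] cos_30 by simp
    moreover have "arccos (-(sqrt 3/2)) = pi - arccos (sqrt 3/2)" by (intro arccos_minus) (use s3 s0 in linarith)+
    ultimately show ?thesis by simp
  qed
  ultimately show ?thesis unfolding ph_def by simp
qed

lemma lim_psi: "(psi m \<longlongrightarrow> (real m+2)*(2*pi/3) - 5*pi/6) at_top"
  unfolding psi_def[abs_def] by (intro tendsto_intros lim_th lim_ph)

lemma th_strict:
  assumes u: "lb \<le> u" and uv: "u < v" shows "th v < th u"
proof -
  define U where "U = 1+u"
  define V where "V = 1+v"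
  have v: "lb \<le> v" using u uv by simp
  have qu: "qf u = U^2 - U + a" "qf v = V^2 - V + a" unfolding U_def V_def qf_def by (simp_all add: power2_eq_square algebra_simps)
  have U0: "U > 0" "V > 0" using u v lb_ge unfolding U_def V_def by auto
  define c where "c = (1+s)^2/3"
  have c1: "1 + lb - a = c" unfolding c_def lb_def using s2 by (simp add: power2_eq_square field_simps)
  have Ua: "U - a \<ge> c" "V - a > c" using u uv c1 unfolding U_def V_def by auto
  have cpos: "c > 0" unfolding c_def using s_nonneg by simp
  have "(U-a)*(V-a) \<ge> c*(V-a)" using Ua cpos by (intro mult_right_mono) auto
  moreover have "c*(V-a) > c*c" using Ua cpos by simp
  ultimately have P: "(U-a)*(V-a) > c^2" by (simp add: power2_eq_square)
  have "c - a \<ge> 0" "c + a > 0" unfolding c_def using s2 s_nonneg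
    by (simp_all add: power2_eq_square field_simps) (smt (verit) mult_nonneg_nonneg s_nonneg)+
  then have "a^2 \<le> c^2" by (smt (verit) abs_le_square_iff abs_le_iff power2_abs)
  with P have key0: "U*V - a*(U+V) > 0" by (simp add: power2_eq_square algebra_simps)
  have "U^2 * qf v - V^2 * qf u = (V-U)*(U*V - a*(U+V))" unfolding qu by (simp add: power2_eq_square algebra_simps)
  moreover have "(V-U)*(U*V - a*(U+V)) > 0" using key0 uv unfolding U_def V_def by simp
  ultimately have key: "V^2 * qf u < U^2 * qf v" by simp
  have qp: "qf u > 0" "qf v > 0" using qf_pos u v by auto
  have "V^2 / qf v < U^2 / qf u" using key qp by (simp add: divide_simps)
  then have "sqrt (V^2 / qf v) < sqrt (U^2 / qf u)" by simp
  then have "V / sqrt (qf v) < U / sqrt (qf u)" using U0 by (simp add: real_sqrt_divide)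
  moreover obtain X Y where XY: "X = U / sqrt (qf u)" "Y = V / sqrt (qf v)" by simp
  ultimately have "Y < X" by simp
  moreover have "cth u = - X / 2" "cth v = - Y / 2"
    unfolding cth_def U_def V_def XY using qp by (simp_all add: field_simps)
  ultimately have "cth u < cth v" by linarith
  then show ?thesis unfolding th_def using cth_bounds[OF u] cth_bounds[OF v]
    by (intro arccos_less_arccos) auto
qed

end


lemma sin_half_int: "sin ((real j + 1/2) * pi) = (-1)^j"
proof -
  have "(real j + 1/2) * pi = real j * pi + pi/2" by (simp add: algebra_simps)
  then show ?thesis by (simp add: sin_add)
qed

lemma sin_plus_2kpi: "sin (y + real k * (2*pi)) = sin y"
proof (induction k)
  case 0 then show ?case by simp
next
  case (Suc k)
  have "y + real (Suc k) * (2*pi) = (y + real k * (2*pi)) + 2*pi" by (simp add: algebra_simps)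
  then show ?case using Suc.IH by (simp only: sin_periodic)
qed

context setting begin

lemma exists_l1: "\<exists>l1>lb. psi m l1 > (real m + 1/2) * pi"
proof -
  define e where "e = pi/(2*(real m+2))"
  have e0: "e > 0" unfolding e_def by simp
  have "\<forall>x\<in>{lb..}. \<forall>e>0. \<exists>d>0. \<forall>x'\<in>{lb..}. dist x' x < d \<longrightarrow> dist (th x') (th x) < e"
    using cont_th unfolding continuous_on_iff .
  then have "\<exists>d>0. \<forall>x'\<in>{lb..}. dist x' lb < d \<longrightarrow> dist (th x') (th lb) < e"
    using e0 by simp
  then obtain d where d: "d > 0" "\<forall>x'\<in>{lb..}. dist x' lb < d \<longrightarrow> dist (th x') (th lb) < e"
    by blast
  define l1 where "l1 = lb + d/2"
  have l1: "l1 > lb" "l1 \<in> {lb..}" "dist l1 lb < d" unfolding l1_def using d by (auto simp: dist_real_def)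
  then have "dist (th l1) pi < e" using d th_lb by auto
  then have t: "th l1 > pi - e" by (auto simp: dist_real_def)
  have "(real m + 2) * (pi - e) = (real m + 2) * pi - pi/2" unfolding e_def by (simp add: field_simps)
  moreover have "(real m + 2) * th l1 > (real m + 2) * (pi - e)" using t by (intro mult_strict_left_mono) auto
  moreover have "ph l1 \<le> pi" using ph_range[OF l1(1)] by simp
  ultimately have "psi m l1 > (real m + 2) * pi - pi/2 - pi" unfolding psi_def by linarith
  moreover have "(real m + 2) * pi - pi/2 - pi = (real m + 1/2) * pi" by (simp add: algebra_simps)
  ultimately show ?thesis using l1 by auto
qed

lemma exists_l2: "\<exists>l2. l2 > l1 \<and> l2 > 0 \<and> \<bar>psi m l2 - ((real m+2)*(2*pi/3) - 5*pi/6)\<bar> < pi/3"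
proof -
  have "eventually (\<lambda>l. dist (psi m l) ((real m+2)*(2*pi/3) - 5*pi/6) < pi/3) at_top"
    using lim_psi[of m] by (rule tendstoD) simp
  moreover have "eventually (\<lambda>l. l > max l1 0) at_top" by (rule eventually_gt_at_top)
  ultimately have "eventually (\<lambda>l. l > max l1 0 \<and> dist (psi m l) ((real m+2)*(2*pi/3) - 5*pi/6) < pi/3) at_top"
    by (rule eventually_conj[rotated])
  then obtain M where "\<forall>l\<ge>M. l > max l1 0 \<and> dist (psi m l) ((real m+2)*(2*pi/3) - 5*pi/6) < pi/3"
    unfolding eventually_at_top_linorder by blast
  then have "M > max l1 0 \<and> dist (psi m M) ((real m+2)*(2*pi/3) - 5*pi/6) < pi/3" by simp
  then obtain l where "l > max l1 0 \<and> dist (psi m l) ((real m+2)*(2*pi/3) - 5*pi/6) < pi/3" by blast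
  then show ?thesis by (intro exI[of _ l]) (auto simp: dist_real_def)
qed

lemma g_cont: "continuous_on A (g m)" by (rule cont_g)

lemma part1:
  shows "H a m \<noteq> 0 \<and> Hzeros a m \<subseteq> complex_of_real ` {..bb}"
proof -
  define K where "K = m div 3"
  define N where "N = (m+2) div 3"
  have NK: "N = K \<or> N = K + 1" unfolding N_def K_def by linarith
  have NK3: "N = K \<longleftrightarrow> m mod 3 = 0" unfolding N_def K_def by presburger
  have N3: "3 * N \<le> m + 2" unfolding N_def by simp
  have Km: "K \<le> m" unfolding K_def by simp
  have Nm: "N \<le> m + 1" using N3 by linarith
  obtain l1 where l1: "l1 > lb" "psi m l1 > (real m + 1/2) * pi" using exists_l1 by blast
  obtain l2 where l2: "l2 > l1" "l2 > 0" "\<bar>psi m l2 - ((real m+2)*(2*pi/3) - 5*pi/6)\<bar> < pi/3"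
    using exists_l2 by blast
  define T where "T i = (real m + 1/2 - real i) * pi" for i
  have contpsi: "continuous_on {l1..l2} (psi m)"
    by (rule continuous_on_subset[OF cont_psi]) (use l1 in auto)
  have bot: "psi m l2 < T i" if "i < N" for i
  proof -
    have "real i \<le> real N - 1" using that by simp
    then have "real m + 1/2 - real i \<ge> real m + 3/2 - real N" by linarith
    then have "T i \<ge> (real m + 3/2 - real N) * pi" unfolding T_def by (intro mult_right_mono) auto
    moreover have "(real m + 3/2 - real N) * pi \<ge> (real m+2)*(2*pi/3) - 5*pi/6 + pi/3"
    proof -
      have "real (3 * N) \<le> real (m + 2)" using N3 by (rule of_nat_mono)
      then have "3 * real N \<le> real m + 2" by simp
      then have "real m + 3/2 - real N \<ge> (real m+2)*(2/3) - 5/6 + 1/3" by (simp add: field_simps)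
      then have "(real m + 3/2 - real N) * pi \<ge> ((real m+2)*(2/3) - 5/6 + 1/3) * pi"
        by (intro mult_right_mono) auto
      then show ?thesis by (simp add: algebra_simps)
    qed
    ultimately show ?thesis using l2(3) by linarith
  qed
  obtain P where P: "\<forall>i<N. l1 \<le> P i \<and> P i \<le> l2 \<and> psi m (P i) = T i" "\<forall>i. Suc i < N \<longrightarrow> P i < P (Suc i)"
    using ivt_points[of l1 l2 "psi m" N T, OF contpsi] l1 l2 bot
    by (auto simp: T_def algebra_simps)
  define P' where "P' i = (if i < N then P i else l2)" for i
  have P'range: "P' i \<ge> l1" "P' i > lb" for i unfolding P'_def using P l1 l2 by auto
  have sgn: "g m (P' i) * (-1)^(m-i) > 0" if "i \<le> K" for i
  proof (cases "i < N")
    case True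
    have "T i = (real (m - i) + 1/2) * pi" unfolding T_def using True Nm by (simp add: of_nat_diff)
    then have "sin (psi m (P i)) = (-1)^(m-i)" using P True by (simp add: sin_half_int)
    then show ?thesis using g_sign[OF P'range(2)[of i]] True unfolding P'_def by simp
  next
    case False
    then have iK: "i = K" "N = K" using that NK by auto
    then have m3: "m = 3 * K" using NK3 unfolding K_def by auto
    have P'l2: "P' i = l2" unfolding P'_def using False by simp
    have ps: "(real m+2)*(2*pi/3) - 5*pi/6 = real K * (2*pi) + pi/2" unfolding m3 by (simp add: field_simps)
    define y where "y = psi m l2 - real K * (2*pi)"
    have yy: "- (pi/3) < psi m l2 - (real K * (2*pi) + pi/2) \<and> psi m l2 - (real K * (2*pi) + pi/2) < pi/3"
      using l2(3) unfolding ps abs_less_iff by linarith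
    have y: "0 < y" "y < pi" using yy pi_gt_zero unfolding y_def by linarith+
    have "sin (psi m l2) = sin y" using sin_plus_2kpi[of y K] unfolding y_def by simp
    then have sp: "sin (psi m l2) > 0" using sin_gt_zero[OF y] by simp
    have lb2: "l2 > lb" using l1 l2 by simp
    have "g m l2 > 0" unfolding g_formula[OF lb2] using sp l2(2) Rf_pos[OF lb2] qf_pos[of l2] Df_pos[OF lb2] lb2
      by (intro add_pos_pos divide_pos_pos mult_pos_pos) auto
    moreover have "(-1::real)^(m-i) = 1" unfolding iK m3 by (simp add: mult_2[symmetric])
    ultimately show ?thesis using P'l2 by simp
  qed
  have P'mono: "P' i < P' (Suc i)" if "i < K" for i
  proof (cases "Suc i < N")
    case True then show ?thesis unfolding P'_def using P by auto
  next
    case False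
    then have iN: "Suc i = N" "N = K" using NK that by auto
    have "P i \<le> l2" using P iN by auto
    moreover have "P i \<noteq> l2"
    proof
      assume "P i = l2"
      then have "psi m l2 = T i" using P iN by auto
      then show False using bot[of i] iN by simp
    qed
    ultimately show ?thesis unfolding P'_def using iN by auto
  qed
  have alt: "g m (P' i) * g m (P' (Suc i)) < 0" if "i < K" for i
  proof -
    have s1: "g m (P' i) * (-1)^(m-i) > 0" and s2: "g m (P' (Suc i)) * (-1)^(m - Suc i) > 0"
      using sgn that by auto
    have "(-1::real)^(m-i) = - ((-1)^(m - Suc i))" using that Km
      by (metis Suc_diff_Suc less_le_trans mult_minus1 power_Suc)
    then have "(g m (P' i) * (-1)^(m-i)) * (g m (P' (Suc i)) * (-1)^(m - Suc i)) = - (g m (P' i) * g m (P' (Suc i)))"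
      by (simp add: algebra_simps flip: power_add mult_2)
    moreover have "(g m (P' i) * (-1)^(m-i)) * (g m (P' (Suc i)) * (-1)^(m - Suc i)) > 0"
      using s1 s2 by simp
    ultimately show ?thesis by linarith
  qed
  obtain Q where Q: "\<forall>i<K. P' i < Q i \<and> Q i < P' (Suc i) \<and> g m (Q i) = 0"
    using roots_between[of "g m" K P', OF cont_g P'mono alt] by blast
  define S where "S = zf ` Q ` {..<K}"
  have Qmono: "Q i < Q j" if "i < j" "j < K" for i j
  proof -
    have "Q i < P' (Suc i)" using Q that by auto
    also have "P' (Suc i) \<le> P' j" using mono_points[of K P', OF P'mono] that by auto
    also have "P' j < Q j" using Q that by auto
    finally show ?thesis .
  qed
  have Qlb: "Q i > lb" if "i < K" for i using Q P'range[of i] that by force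
  have inj: "inj_on (zf \<circ> Q) {..<K}"
  proof (rule inj_onI)
    fix i j assume ij: "i \<in> {..<K}" "j \<in> {..<K}" "(zf \<circ> Q) i = (zf \<circ> Q) j"
    show "i = j"
    proof (rule ccontr)
      assume "i \<noteq> j"
      then consider "i < j" | "j < i" by linarith
      then show False
      proof cases
        case 1 then have "zf (Q j) < zf (Q i)" using zf_strict[of "Q i" "Q j"] Qmono[of i j] Qlb[of i] ij by auto
        then show False using ij by simp
      next
        case 2 then have "zf (Q i) < zf (Q j)" using zf_strict[of "Q j" "Q i"] Qmono[of j i] Qlb[of j] ij by auto
        then show False using ij by simp
      qed
    qed
  qed
  have cardS: "card S = K" unfolding S_def image_comp using card_image[OF inj] by simp
  have finS: "finite S" unfolding S_def by simp
  have rootS: "\<forall>x\<in>S. poly (H a m) x = 0" unfolding S_def using Q unfolding g_def by auto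
  have SIa: "S \<subseteq> {..bb}"
  proof
    fix x assume "x \<in> S"
    then obtain i where i: "i < K" "x = zf (Q i)" unfolding S_def by auto
    then have "zf (Q i) < zf lb" using zf_strict[of lb "Q i"] Qlb[of i] by auto
    then show "x \<in> {..bb}" using i zf_lb by simp
  qed
  have Hne: "H a m \<noteq> 0"
  proof
    assume "H a m = 0"
    then have "g m (P' 0) = 0" unfolding g_def by simp
    then show False using sgn[of 0] by simp
  qed
  have "Hzeros a m = complex_of_real ` S"
    unfolding Hzeros_def by (rule all_roots_real[OF Hne _ finS rootS]) (use H_degree[of a m] cardS K_def in simp)
  then show ?thesis using Hne SIa by auto
qed

end


context setting begin

lemma zf_hit: assumes "x < bb" shows "\<exists>l0>lb. zf l0 = x"
proof -
  have "eventually (\<lambda>l. zf l < x) at_top"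
    using zf_at_bot unfolding filterlim_at_bot_dense by blast
  then obtain M where M: "\<forall>l\<ge>M. zf l < x" unfolding eventually_at_top_linorder by blast
  define L where "L = max M (lb+1)"
  have L: "zf L < x" "lb \<le> L" using M unfolding L_def by auto
  have "continuous_on {lb..L} zf" by (rule cont_zf)
  then obtain l0 where l0: "lb \<le> l0" "l0 \<le> L" "zf l0 = x"
    using IVT2'[of zf L x lb] L zf_lb assms by auto
  moreover have "l0 \<noteq> lb" using l0 zf_lb assms by auto
  ultimately show ?thesis by (intro exI[of _ l0]) auto
qed

lemma dense_below:
  assumes x: "x < bb"
  shows "x \<in> closure (\<Union>m \<in> {m. H a m \<noteq> 0}. {x::real. complex_of_real x \<in> Hzeros a m})"
  unfolding closure_approachable
proof (intro allI impI)
  fix e :: real assume e: "e > 0"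
  obtain l0 where l0: "l0 > lb" "zf l0 = x" using zf_hit[OF x] by blast
  have "\<forall>y\<in>UNIV. \<forall>e>0. \<exists>d>0. \<forall>x'\<in>UNIV. dist x' y < d \<longrightarrow> dist (zf x') (zf y) < e"
    using cont_zf[of UNIV] unfolding continuous_on_iff .
  then obtain d where d: "d > 0" "\<And>l. dist l l0 < d \<Longrightarrow> dist (zf l) (zf l0) < e"
    using e by blast
  define del where "del = min d (l0 - lb) / 2"
  have del: "del > 0" "del < d" "del < l0 - lb" unfolding del_def using d l0 by auto
  define u where "u = l0 - del"
  define v where "v = l0 + del"
  have uv: "lb < u" "u < v" unfolding u_def v_def using del by auto
  have thuv: "th v < th u" using th_strict[of u v] uv by auto
  obtain n :: nat where n: "4*pi/(th u - th v) < real n" using reals_Archimedean2 by blast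
  define m where "m = n"
  have "4*pi < real n * (th u - th v)" using n thuv by (simp add: field_simps)
  also have "\<dots> \<le> (real m + 2) * (th u - th v)" unfolding m_def using thuv by (intro mult_right_mono) auto
  finally have big: "(real m + 2) * (th u - th v) > 4*pi" .
  have phr: "0 \<le> ph u" "ph u \<le> pi" "0 \<le> ph v" "ph v \<le> pi" using ph_range uv by auto
  have gap: "psi m u - psi m v > 3*pi"
  proof -
    have "psi m u - psi m v = (real m + 2) * (th u - th v) - (ph u - ph v)" unfolding psi_def by (simp add: algebra_simps)
    then show ?thesis using big phr by linarith
  qed
  have psv: "psi m v \<ge> 0"
  proof -
    have "th v \<ge> pi/2" using th_range[of v] uv by auto
    then have "(real m + 2) * th v \<ge> (real m + 2) * (pi/2)" by (intro mult_left_mono) auto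
    moreover have "(real m + 2) * (pi/2) \<ge> pi" by (simp add: field_simps)
    ultimately show ?thesis unfolding psi_def using phr by linarith
  qed
  define j where "j = nat \<lceil>psi m v / pi\<rceil>"
  have j1: "real j \<ge> psi m v / pi" "real j < psi m v / pi + 1" unfolding j_def using psv
    by (simp_all add: ceiling_correct) linarith
  have j2: "real j * pi \<ge> psi m v" "real j * pi < psi m v + pi" using j1
    by (simp_all add: field_simps)
  define T1 where "T1 = (real j + 1/2) * pi"
  define T2 where "T2 = (real (Suc j) + 1/2) * pi"
  have T: "psi m v < T1" "T1 < T2" "T2 < psi m u" unfolding T1_def T2_def using j2 gap
    by (simp_all add: algebra_simps)
  have contp: "continuous_on {u..v} (psi m)" by (rule continuous_on_subset[OF cont_psi]) (use uv in auto)
  obtain w1 where w1: "u \<le> w1" "w1 \<le> v" "psi m w1 = T1"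
    using IVT2'[of "psi m" v T1 u, OF _ _ _ contp] T uv by auto
  obtain w2 where w2: "u \<le> w2" "w2 \<le> v" "psi m w2 = T2"
    using IVT2'[of "psi m" v T2 u, OF _ _ _ contp] T uv by auto
  have s1: "g m w1 * (-1)^j > 0" using g_sign[of w1 m j] w1 uv unfolding T1_def by (simp add: sin_half_int)
  have s2: "g m w2 * (-1)^(Suc j) > 0" using g_sign[of w2 m "Suc j"] w2 uv unfolding T2_def
    by (simp only: sin_half_int)
  have prod: "g m w1 * g m w2 < 0"
  proof -
    have "(g m w1 * (-1)^j) * (g m w2 * (-1)^(Suc j)) = - (g m w1 * g m w2)"
      by (simp add: algebra_simps flip: power_add mult_2)
    moreover have "(g m w1 * (-1)^j) * (g m w2 * (-1)^(Suc j)) > 0" by (rule mult_pos_pos[OF s1 s2])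
    ultimately show ?thesis by linarith
  qed
  have w12: "w1 \<noteq> w2" using w1 w2 T by auto
  define P where "P i = (if i = 0 then min w1 w2 else max w1 w2)" for i :: nat
  have Pm: "P i < P (Suc i)" if "i < 1" for i using that w12 unfolding P_def by auto
  have Pa: "g m (P i) * g m (P (Suc i)) < 0" if "i < 1" for i
    using that prod unfolding P_def by (auto simp: min_def max_def mult.commute)
  obtain Q where Q: "\<forall>i<1. P i < Q i \<and> Q i < P (Suc i) \<and> g m (Q i) = 0"
    using roots_between[of "g m" 1 P, OF cont_g Pm Pa] by blast
  define w where "w = Q 0"
  have w: "u < w" "w < v" "g m w = 0" using Q w1 w2 unfolding w_def P_def by auto
  have "dist w l0 < d" using w del unfolding u_def v_def dist_real_def by auto
  then have dz: "dist (zf w) x < e" using d(2) l0 by auto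
  have Hne: "H a m \<noteq> 0"
  proof
    assume "H a m = 0"
    then have "g m w1 = 0" unfolding g_def by simp
    then show False using s1 by simp
  qed
  have "complex_of_real (zf w) \<in> Hzeros a m"
    unfolding Hzeros_def using w(3) unfolding g_def by (simp add: poly_of_real_map)
  then show "\<exists>y\<in>(\<Union>m \<in> {m. H a m \<noteq> 0}. {x::real. complex_of_real x \<in> Hzeros a m}). dist y x < e"
    using Hne dz by blast
qed

end

theorem theorem2p1:
  fixes a :: real
  assumes "-1 \<le> a" and "a \<le> 1/3"
  shows "(\<forall>m. H a m \<noteq> 0 \<longrightarrow> Hzeros a m \<subseteq> complex_of_real ` Ia a)
       \<and> Ia a \<subseteq> closure (\<Union>m \<in> {m. H a m \<noteq> 0}. {x::real. complex_of_real x \<in> Hzeros a m})"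
proof -
  interpret setting a using assms by unfold_locales
  have Ia: "Ia a = {..bb}" unfolding Ia_def bb_def by simp
  have 1: "\<forall>m. H a m \<noteq> 0 \<longrightarrow> Hzeros a m \<subseteq> complex_of_real ` Ia a"
    unfolding Ia using part1 by blast
  have "{..<bb} \<subseteq> closure (\<Union>m \<in> {m. H a m \<noteq> 0}. {x::real. complex_of_real x \<in> Hzeros a m})"
    using dense_below by blast
  then have "closure {..<bb} \<subseteq> closure (\<Union>m \<in> {m. H a m \<noteq> 0}. {x::real. complex_of_real x \<in> Hzeros a m})"
    by (rule closure_minimal) simp
  then have 2: "Ia a \<subseteq> closure (\<Union>m \<in> {m. H a m \<noteq> 0}. {x::real. complex_of_real x \<in> Hzeros a m})"
    unfolding Ia by simp
  show ?thesis using 1 2 by blast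
qed

end
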